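(* Let $\mathcal{H} = \mathbb{C}^2 \otimes \mathbb{C}^2$ with standard basis $e_1, e_2$ of $\mathbb{C}^2$, let $\mathfrak{N}_1 = \mathbb{B}(\mathbb{C}^2) \otimes I$ and $\mathfrak{N}_2 = I \otimes \mathbb{B}(\mathbb{C}^2)$, and let $$\Psi_2 = \tfrac{1}{2}\, e_1 \otimes e_1 + \tfrac{\sqrt{3}}{2}\, e_2 \otimes e_2 .$$ Then the vector state $\omega(X) = \langle \Psi_2, X\Psi_2\rangle$ on $\mathfrak{N}_1 \vee \mathfrak{N}_2 = \mathbb{B}(\mathcal{H})$ is not an EPR state for incommensurable pairs.
   Context: $[X,Y] = XY - YX$, $|X|^2 = X^*X$. For commuting self-adjoint operators $A_1, A_2$, a normal state $\omega$ is an EPR state for $(A_1, A_2)$ if $\omega((A_1 - A_2)^2) = 0$. A normal state $\omega$ of $\mathfrak{N}_1 \vee \mathfrak{N}_2$ (where $\mathfrak{N}_1 \subseteq \mathfrak{N}_2'$) is an EPR state for incommensurable pairs if there exist projections $E_1, F_1 \in \mathfrak{N}_1$ and $E_2, F_2 \in \mathfrak{N}_2$ such that $\omega$ is an EPR state for $(E_1,E_2)$ and for $(F_1,F_2)$, $\omega(|[E_1,F_1]|^2) \neq 0$, and $\omega(|[E_2,F_2]|^2) \neq 0$. *)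

theory Defs
  imports "HOL-Analysis.Analysis"
begin

text \<open>Standard basis index of C^2: e1 corresponds to B1, e2 to B2.\<close>
datatype basis2 = B1 | B2

lemma UNIV_basis2: "(UNIV :: basis2 set) = {B1, B2}"
  using basis2.exhaust by auto

instance basis2 :: finite
  by standard (simp add: UNIV_basis2)

type_synonym 'n op = "complex^'n^'n"

definition adj :: "'n::finite op \<Rightarrow> 'n op" where
  "adj M = (\<chi> i j. cnj (M $ j $ i))"

definition commutator :: "'n::finite op \<Rightarrow> 'n op \<Rightarrow> 'n op" where
  "commutator X Y = X ** Y - Y ** X"

definition abs_sq :: "'n::finite op \<Rightarrow> 'n op" where
  "abs_sq X = adj X ** X"

definition is_projection :: "'n::finite op \<Rightarrow> bool" where
  "is_projection P \<longleftrightarrow> P ** P = P \<and> adj P = P"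

definition tensor_op :: "'m::finite op \<Rightarrow> 'n::finite op \<Rightarrow> ('m \<times> 'n) op" where
  "tensor_op A B = (\<chi> p q. A $ fst p $ fst q * B $ snd p $ snd q)"

definition N1 :: "(basis2 \<times> basis2) op set" where
  "N1 = {tensor_op A (mat 1) | A. True}"

definition N2 :: "(basis2 \<times> basis2) op set" where
  "N2 = {tensor_op (mat 1) B | B. True}"

definition vector_state :: "complex^'n::finite \<Rightarrow> 'n op \<Rightarrow> complex" where
  "vector_state \<Psi> X = (\<Sum>i\<in>UNIV. cnj (\<Psi> $ i) * (X *v \<Psi>) $ i)"

definition Psi2 :: "complex^(basis2 \<times> basis2)" where
  "Psi2 = (\<chi> p. if p = (B1, B1) then 1/2
                     else if p = (B2, B2) then complex_of_real (sqrt 3 / 2) else 0)"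

definition EPR_state :: "('n::finite op \<Rightarrow> complex) \<Rightarrow> 'n op \<Rightarrow> 'n op \<Rightarrow> bool" where
  "EPR_state \<omega> A1 A2 \<longleftrightarrow> \<omega> ((A1 - A2) ** (A1 - A2)) = 0"

definition EPR_incommensurable ::
  "('n::finite op \<Rightarrow> complex) \<Rightarrow> 'n op set \<Rightarrow> 'n op set \<Rightarrow> bool" where
  "EPR_incommensurable \<omega> M1 M2 \<longleftrightarrow>
     (\<exists>E1 F1 E2 F2. E1 \<in> M1 \<and> F1 \<in> M1 \<and> E2 \<in> M2 \<and> F2 \<in> M2 \<and>
        is_projection E1 \<and> is_projection F1 \<and> is_projection E2 \<and> is_projection F2 \<and>
        EPR_state \<omega> E1 E2 \<and> EPR_state \<omega> F1 F2 \<and>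
        \<omega> (abs_sq (commutator E1 F1)) \<noteq> 0 \<and>
        \<omega> (abs_sq (commutator E2 F2)) \<noteq> 0)"

end

theory Submission
  imports Defs
begin

abbreviation I2 :: "basis2 op" where "I2 \<equiv> mat 1"

lemma UNIV_pair: "(UNIV :: (basis2 \<times> basis2) set) = {(B1,B1),(B1,B2),(B2,B1),(B2,B2)}"
  using UNIV_basis2 by auto

lemma sum_pair: "(\<Sum>p\<in>(UNIV :: (basis2 \<times> basis2) set). f p) = f (B1,B1) + f (B1,B2) + f (B2,B1) + f (B2,B2)"
  by (simp add: UNIV_pair add.assoc)

lemma sum_b2: "(\<Sum>p\<in>(UNIV :: basis2 set). f p) = f B1 + f B2"
  by (simp add: UNIV_basis2)

lemma vs_sq:
  fixes X :: "'n::finite op"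
  assumes "adj X = X"
  shows "vector_state \<Psi> (X ** X) = (\<Sum>j\<in>UNIV. complex_of_real ((cmod ((X *v \<Psi>) $ j))^2))"
proof -
  have "vector_state \<Psi> (X ** X) = (\<Sum>i\<in>UNIV. cnj (\<Psi> $ i) * (\<Sum>j\<in>UNIV. X $ i $ j * (X *v \<Psi>) $ j))"
  proof -
    have e: "(X ** X) *v \<Psi> = X *v (X *v \<Psi>)" by (simp add: matrix_vector_mul_assoc)
    have f: "(X *v (X *v \<Psi>)) $ i = (\<Sum>j\<in>UNIV. X $ i $ j * (X *v \<Psi>) $ j)" for i
      by (simp add: matrix_vector_mult_def)
    show ?thesis unfolding vector_state_def e f ..
  qed
  also have "\<dots> = (\<Sum>j\<in>UNIV. (\<Sum>i\<in>UNIV. cnj (\<Psi> $ i) * X $ i $ j) * (X *v \<Psi>) $ j)"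
    by (simp add: sum_distrib_left sum_distrib_right mult.assoc) (rule sum.swap)
  also have "\<dots> = (\<Sum>j\<in>UNIV. cnj ((X *v \<Psi>) $ j) * (X *v \<Psi>) $ j)"
  proof (rule sum.cong[OF refl])
    fix j
    have "X $ i $ j = cnj (X $ j $ i)" for i
      using arg_cong[OF assms, of "\<lambda>M. M $ i $ j"] by (simp add: adj_def)
    then show "(\<Sum>i\<in>UNIV. cnj (\<Psi> $ i) * X $ i $ j) * (X *v \<Psi>) $ j = cnj ((X *v \<Psi>) $ j) * (X *v \<Psi>) $ j"
      by (simp add: matrix_vector_mult_def mult.commute)
  qed
  also have "\<dots> = (\<Sum>j\<in>UNIV. complex_of_real ((cmod ((X *v \<Psi>) $ j))^2))"
    by (rule sum.cong[OF refl]) (simp add: complex_norm_square[symmetric] mult.commute del: of_real_power)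
  finally show ?thesis .
qed

lemma vs_zero_comp:
  fixes X :: "'n::finite op"
  assumes "adj X = X" "vector_state \<Psi> (X ** X) = 0"
  shows "(X *v \<Psi>) $ j = 0"
proof -
  have "(\<Sum>j\<in>UNIV. (cmod ((X *v \<Psi>) $ j))^2) = 0"
    using assms vs_sq[OF assms(1), of \<Psi>] by (metis of_real_eq_0_iff of_real_sum)
  then have "(cmod ((X *v \<Psi>) $ j))^2 = 0"
    using sum_nonneg_eq_0_iff[of UNIV "\<lambda>j. (cmod ((X *v \<Psi>) $ j))^2"] by simp
  then show ?thesis by simp
qed

lemma adj_diff: "adj (X - Y) = adj X - adj Y"
  by (simp add: adj_def vec_eq_iff)

lemma key:
  fixes A B :: "basis2 op"
  assumes pA: "adj (tensor_op A I2) = tensor_op A I2"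
    and pB: "adj (tensor_op I2 B) = tensor_op I2 B"
    and e: "EPR_state (vector_state Psi2) (tensor_op A I2) (tensor_op I2 B)"
  shows "A $ B1 $ B2 = 0"
proof -
  let ?X = "tensor_op A I2 - tensor_op I2 (B :: basis2 op)"
  have sa: "adj ?X = ?X" using pA pB by (simp add: adj_diff)
  have z: "(?X *v Psi2) $ j = 0" for j
    using vs_zero_comp[OF sa] e by (simp add: EPR_state_def)
  define c where "c = complex_of_real (sqrt 3 / 2)"
  have c2: "c * c = 3/4" unfolding c_def
    by (simp flip: of_real_mult)
  have z1: "A $ B1 $ B2 * c - B $ B2 $ B1 * (1/2) = 0"
    using z[of "(B1,B2)"]
    by (simp add: matrix_vector_mult_def sum_pair tensor_op_def Psi2_def mat_def c_def)
  have z2: "A $ B2 $ B1 * (1/2) - B $ B1 $ B2 * c = 0"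
    using z[of "(B2,B1)"]
    by (simp add: matrix_vector_mult_def sum_pair tensor_op_def Psi2_def mat_def c_def)
  have a: "A $ B2 $ B1 = cnj (A $ B1 $ B2)"
    using arg_cong[OF pA, of "\<lambda>M. M $ (B2,B1) $ (B1,B1)"] by (simp add: adj_def tensor_op_def mat_def)
  have b: "B $ B2 $ B1 = cnj (B $ B1 $ B2)"
    using arg_cong[OF pB, of "\<lambda>M. M $ (B1,B2) $ (B1,B1)"] by (simp add: adj_def tensor_op_def mat_def)
  have cc: "cnj c = c" unfolding c_def by simp
  from z2 have "cnj (A $ B2 $ B1 * (1/2) - B $ B1 $ B2 * c) = 0" by simp
  then have z2': "A $ B1 $ B2 * (1/2) - B $ B2 $ B1 * c = 0" using a b cc by simp
  from z1 have "A $ B1 $ B2 * c * c = B $ B2 $ B1 * c * (1/2)" by (simp add: algebra_simps)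
  also have "\<dots> = A $ B1 $ B2 * (1/2) * (1/2)" using z2' by (simp add: algebra_simps)
  finally have "A $ B1 $ B2 * (c*c - 1/4) = 0" by (simp add: algebra_simps)
  then show ?thesis using c2 by simp
qed

lemma key2:
  fixes A B :: "basis2 op"
  assumes pA: "adj (tensor_op A I2) = tensor_op A I2"
    and pB: "adj (tensor_op I2 B) = tensor_op I2 B"
    and e: "EPR_state (vector_state Psi2) (tensor_op A I2) (tensor_op I2 B)"
  shows "A $ B1 $ B2 = 0 \<and> A $ B2 $ B1 = 0"
proof -
  have "A $ B1 $ B2 = 0" by (rule key[OF assms])
  moreover have "A $ B2 $ B1 = cnj (A $ B1 $ B2)"
    using arg_cong[OF pA, of "\<lambda>M. M $ (B2,B1) $ (B1,B1)"] by (simp add: adj_def tensor_op_def mat_def)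
  ultimately show ?thesis by simp
qed

lemma comm_zero:
  fixes A C :: "basis2 op"
  assumes "A $ B1 $ B2 = 0" "A $ B2 $ B1 = 0" "C $ B1 $ B2 = 0" "C $ B2 $ B1 = 0"
  shows "commutator (tensor_op A I2) (tensor_op C I2) = 0"
  unfolding commutator_def vec_eq_iff
proof (intro allI)
  fix p q :: "basis2 \<times> basis2"
  obtain p1 p2 q1 q2 where "p = (p1,p2)" "q = (q1,q2)" by fastforce
  moreover have "p1 = B1 \<or> p1 = B2" "p2 = B1 \<or> p2 = B2" "q1 = B1 \<or> q1 = B2" "q2 = B1 \<or> q2 = B2"
    by (meson basis2.exhaust)+
  ultimately show "(tensor_op A I2 ** tensor_op C I2 - tensor_op C I2 ** tensor_op A I2) $ p $ q = 0 $ p $ q"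
    using assms
    by (auto simp: matrix_matrix_mult_def sum_pair tensor_op_def mat_def mult.commute)
qed

theorem mainTheorem4:
  shows "\<not> EPR_incommensurable (vector_state Psi2) N1 N2"
proof
  assume "EPR_incommensurable (vector_state Psi2) N1 N2"
  then obtain E1 F1 E2 F2 where h: "E1 \<in> N1" "F1 \<in> N1" "E2 \<in> N2" "F2 \<in> N2"
    "is_projection E1" "is_projection F1" "is_projection E2" "is_projection F2"
    "EPR_state (vector_state Psi2) E1 E2" "EPR_state (vector_state Psi2) F1 F2"
    "vector_state Psi2 (abs_sq (commutator E1 F1)) \<noteq> 0"
    unfolding EPR_incommensurable_def by blast
  obtain A where A: "E1 = tensor_op A (mat 1)" using h(1) by (auto simp: N1_def)
  obtain C where C: "F1 = tensor_op C (mat 1)" using h(2) by (auto simp: N1_def)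
  obtain B where B: "E2 = tensor_op (mat 1) B" using h(3) by (auto simp: N2_def)
  obtain D where D: "F2 = tensor_op (mat 1) D" using h(4) by (auto simp: N2_def)
  have "A $ B1 $ B2 = 0 \<and> A $ B2 $ B1 = 0"
    by (rule key2) (use h A B in \<open>auto simp: is_projection_def\<close>)
  moreover have "C $ B1 $ B2 = 0 \<and> C $ B2 $ B1 = 0"
    by (rule key2) (use h C D in \<open>auto simp: is_projection_def\<close>)
  ultimately have "commutator E1 F1 = 0" using A C comm_zero by blast
  then have "vector_state Psi2 (abs_sq (commutator E1 F1)) = 0"
    by (simp add: abs_sq_def vector_state_def)
  with h(11) show False by simp
qed

end
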